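(* Let $r\ge 0$ be an integer and $\delta>0$. Every graph $G$ with $\tilde\nabla_{r/2}(G)\ge\delta$ contains a stable $i$-subdivision of density at least $\delta/(r+1)$ for some $i\in\{0,\dots,r\}$.
   Context: For a graph $H$, a subdivision of $H$ replaces edges of $H$ by internally vertex-disjoint paths; the vertices corresponding to $V(H)$ are called nails, the subgraph of $G$ realizing it is the model. For half-integer $s\ge0$, $H$ is an $s$-shallow topological minor of $G$ if $G$ contains as a subgraph a subdivision of $H$ in which every edge of $H$ is replaced by a path of length at most $2s+1$. Density of a graph is $|E|/|V|$, and $\tilde\nabla_s(G)$ is the maximum density of an $s$-shallow topological minor of $G$. $G$ contains $H$ as a stable $i$-subdivision if $G$ contains $H$ as an $\frac{i}{2}$-shallow topological minor with a model in which every path corresponding to an edge of $H$ has length exactly $i+1$ and is an induced path in $G$; the density of the stable subdivision is the density of $H$. *)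

theory Defs
  imports Main Complex_Main
begin

type_synonym 'a graph = "'a set \<times> 'a set set"

definition verts :: "'a graph \<Rightarrow> 'a set" where "verts G = fst G"
definition edges :: "'a graph \<Rightarrow> 'a set set" where "edges G = snd G"

definition graph :: "'a graph \<Rightarrow> bool" where
  "graph G \<longleftrightarrow> finite (verts G) \<and>
     (\<forall>e\<in>edges G. \<exists>u v. u \<in> verts G \<and> v \<in> verts G \<and> u \<noteq> v \<and> e = {u, v})"

text \<open>Density |E|/|V| (0 for the empty graph, by the convention x / 0 = 0).\<close>
definition density :: "'a graph \<Rightarrow> real" where
  "density G = real (card (edges G)) / real (card (verts G))"

definition is_path :: "'a graph \<Rightarrow> 'a list \<Rightarrow> bool" where
  "is_path G p \<longleftrightarrow> p \<noteq> [] \<and> distinct p \<and> set p \<subseteq> verts G \<and>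
     (\<forall>j. Suc j < length p \<longrightarrow> {p ! j, p ! Suc j} \<in> edges G)"

definition path_len :: "'a list \<Rightarrow> nat" where
  "path_len p = length p - 1"

definition induced_path :: "'a graph \<Rightarrow> 'a list \<Rightarrow> bool" where
  "induced_path G p \<longleftrightarrow> is_path G p \<and>
     (\<forall>j k. j < length p \<longrightarrow> k < length p \<longrightarrow> {p ! j, p ! k} \<in> edges G \<longrightarrow>
        k = Suc j \<or> j = Suc k)"

text \<open>Model of a subdivision of H in G. Up to isomorphism of H, we take the vertices
  of H to be the nails themselves (so verts H \<subseteq> verts G); P e is the path
  realising the edge e of H.\<close>
definition subdivision_model :: "'a graph \<Rightarrow> 'a graph \<Rightarrow> ('a set \<Rightarrow> 'a list) \<Rightarrow> bool" where
  "subdivision_model G H P \<longleftrightarrow> graph H \<and> verts H \<subseteq> verts G \<and>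
     (\<forall>e\<in>edges H. is_path G (P e) \<and> e = {hd (P e), last (P e)} \<and>
        (set (P e) - e) \<inter> verts H = {}) \<and>
     (\<forall>e\<in>edges H. \<forall>e'\<in>edges H. e \<noteq> e' \<longrightarrow> set (P e) \<inter> set (P e') \<subseteq> e \<inter> e')"

text \<open>s-shallow topological minor (s a nonnegative half-integer, given as a real).\<close>
definition shallow_top_minor :: "real \<Rightarrow> 'a graph \<Rightarrow> 'a graph \<Rightarrow> bool" where
  "shallow_top_minor s H G \<longleftrightarrow>
     (\<exists>P. subdivision_model G H P \<and> (\<forall>e\<in>edges H. real (path_len (P e)) \<le> 2 * s + 1))"

definition tnabla :: "real \<Rightarrow> 'a graph \<Rightarrow> real" where
  "tnabla s G = Max {density H | H. shallow_top_minor s H G}"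

definition stable_subdivision :: "nat \<Rightarrow> 'a graph \<Rightarrow> 'a graph \<Rightarrow> bool" where
  "stable_subdivision i H G \<longleftrightarrow>
     (\<exists>P. subdivision_model G H P \<and>
        (\<forall>e\<in>edges H. path_len (P e) = i + 1 \<and> induced_path G (P e)))"

end

theory Submission
  imports Defs
begin

lemma shortcut_path:
  assumes "graph G" and p: "is_path G p" and ab: "Suc a < b" "b < length p"
    and e: "{p!a, p!b} \<in> edges G"
  shows "is_path G (take (Suc a) p @ drop b p) \<and> hd (take (Suc a) p @ drop b p) = hd p
    \<and> last (take (Suc a) p @ drop b p) = last p
    \<and> set (take (Suc a) p @ drop b p) \<subseteq> set p
    \<and> length (take (Suc a) p @ drop b p) < length p"
proof -
  define q where "q = take (Suc a) p @ drop b p"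
  have lq: "length q = Suc a + (length p - b)" using ab by (simp add: q_def)
  have qn: "q ! m = (if m \<le> a then p ! m else p ! (b + (m - Suc a)))" if "m < length q" for m
    using that ab by (auto simp: q_def nth_append lq)
  have dp: "distinct p" "p \<noteq> []" "set p \<subseteq> verts G" using p by (auto simp: is_path_def)
  have "distinct q" unfolding q_def using dp ab
    by (simp add: set_take_disj_set_drop_if_distinct)
  moreover have "set q \<subseteq> set p" unfolding q_def
    using set_take_subset set_drop_subset by fastforce
  moreover have "{q ! m, q ! Suc m} \<in> edges G" if m: "Suc m < length q" for m
  proof -
    consider "m < a" | "m = a" | "m > a" by linarith
    then show ?thesis
    proof cases
      case 1 then show ?thesis using qn[of m] qn[of "Suc m"] m p unfolding is_path_def
        using ab by auto
    next
      case 2 then show ?thesis using qn[of m] qn[of "Suc m"] m e by simp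
    next
      case 3
      have "Suc (b + (m - Suc a)) < length p" using m 3 lq by linarith
      moreover have "b + (Suc m - Suc a) = Suc (b + (m - Suc a))" using 3 by simp
      ultimately show ?thesis using qn[of m] qn[of "Suc m"] m 3 p unfolding is_path_def
        by auto
    qed
  qed
  moreover have "q \<noteq> []" using lq by auto
  ultimately have "is_path G q" using dp unfolding is_path_def by blast
  moreover have "hd q = hd p" using dp by (simp add: q_def)
  moreover have "last q = last p" using ab by (simp add: q_def)
  moreover have "length q < length p" using lq ab by simp
  ultimately show ?thesis using \<open>set q \<subseteq> set p\<close> by (simp add: q_def)
qed

lemma shortcut:
  assumes "graph G" "is_path G p"
  shows "\<exists>q. induced_path G q \<and> hd q = hd p \<and> last q = last p \<and> set q \<subseteq> set p \<and> length q \<le> length p"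
  using assms(2)
proof (induction "length p" arbitrary: p rule: less_induct)
  case less
  show ?case
  proof (cases "induced_path G p")
    case True then show ?thesis by blast
  next
    case False
    then obtain j k where jk: "j < length p" "k < length p" "{p!j, p!k} \<in> edges G"
      "k \<noteq> Suc j" "j \<noteq> Suc k"
      using less.prems unfolding induced_path_def by blast
    have "p!j \<noteq> p!k" using jk(3) assms(1) unfolding graph_def by force
    hence "j \<noteq> k" by auto
    obtain a b where ab: "Suc a < b" "b < length p" "{p!a, p!b} \<in> edges G"
    proof (cases "j < k")
      case True then show ?thesis using that[of j k] jk by auto
    next
      case False then show ?thesis using that[of k j] jk \<open>j \<noteq> k\<close> by (auto simp: insert_commute)
    qed
    note s = shortcut_path[OF assms(1) less.prems ab]
    from less.hyps[of "take (Suc a) p @ drop b p"] s obtain q where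
      "induced_path G q \<and> hd q = hd (take (Suc a) p @ drop b p) \<and> last q = last (take (Suc a) p @ drop b p)
       \<and> set q \<subseteq> set (take (Suc a) p @ drop b p) \<and> length q \<le> length (take (Suc a) p @ drop b p)"
      by blast
    then show ?thesis using s by (metis le_less order_trans)
  qed
qed

lemma graph_edge_two:
  assumes "graph H" "e \<in> edges H"
  shows "\<exists>u v. u \<in> verts H \<and> v \<in> verts H \<and> u \<noteq> v \<and> e = {u, v}"
  using assms unfolding graph_def by blast

lemma stm_finite:
  "finite {density H | H. shallow_top_minor s H (G::'a graph)}" if "graph G"
proof -
  have "{H. shallow_top_minor s H G} \<subseteq> Pow (verts G) \<times> Pow (Pow (verts G))"
  proof
    fix H assume "H \<in> {H. shallow_top_minor s H G}"
    then obtain P where m: "subdivision_model G H P" unfolding shallow_top_minor_def by blast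
    hence "fst H \<subseteq> verts G" "graph H" unfolding subdivision_model_def verts_def by auto
    moreover have "snd H \<subseteq> Pow (verts G)"
    proof
      fix e assume "e \<in> snd H"
      then obtain u v where "u \<in> verts H" "v \<in> verts H" "e = {u,v}"
        using graph_edge_two[OF \<open>graph H\<close>] unfolding edges_def by blast
      then show "e \<in> Pow (verts G)" using m unfolding subdivision_model_def by auto
    qed
    ultimately show "H \<in> Pow (verts G) \<times> Pow (Pow (verts G))" by (cases H) auto
  qed
  moreover have "finite (Pow (verts G) \<times> Pow (Pow (verts G)))" using that unfolding graph_def by simp
  ultimately have "finite {H. shallow_top_minor s H G}" by (rule finite_subset)
  then have "finite (density ` {H. shallow_top_minor s H G})" by simp
  moreover have "{density H | H. shallow_top_minor s H G} = density ` {H. shallow_top_minor s H G}" by auto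
  ultimately show ?thesis by simp
qed

lemma stm_nonempty: "shallow_top_minor s ({}, {}) G"
  unfolding shallow_top_minor_def subdivision_model_def graph_def verts_def edges_def by simp

theorem mainTheorem8:
  fixes G :: "'a graph" and r :: nat and \<delta> :: real
  assumes "graph G" and "\<delta> > 0" and "tnabla (real r / 2) G \<ge> \<delta>"
  shows "\<exists>i\<le>r. \<exists>H. stable_subdivision i H G \<and> density H \<ge> \<delta> / real (r + 1)"
proof -
  let ?S = "{density H | H. shallow_top_minor (real r / 2) H G}"
  have "Max ?S \<in> ?S"
    proof (rule Max_in)
    show "finite ?S" by (rule stm_finite[OF assms(1)])
    have "density (({}, {}) :: 'a graph) \<in> ?S" using stm_nonempty[of "real r / 2" G]
      by (intro CollectI exI[of _ "({}, {}) :: 'a graph"]) simp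
    then show "?S \<noteq> {}" by blast
  qed
  then obtain H where H: "shallow_top_minor (real r / 2) H G" "density H \<ge> \<delta>"
    using assms(3) unfolding tnabla_def by auto
  then obtain P where mP: "subdivision_model G H P"
    and lenP: "\<forall>e\<in>edges H. real (path_len (P e)) \<le> 2 * (real r / 2) + 1"
    unfolding shallow_top_minor_def by blast
  have gH: "graph H" using mP unfolding subdivision_model_def by blast
  define Q where "Q e = (SOME q. induced_path G q \<and> hd q = hd (P e) \<and> last q = last (P e)
      \<and> set q \<subseteq> set (P e) \<and> length q \<le> length (P e))" for e
  have Q: "induced_path G (Q e) \<and> hd (Q e) = hd (P e) \<and> last (Q e) = last (P e)
      \<and> set (Q e) \<subseteq> set (P e) \<and> length (Q e) \<le> length (P e)" if "e \<in> edges H" for e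
  proof -
    have "is_path G (P e)" using mP that unfolding subdivision_model_def by blast
    from shortcut[OF assms(1) this] show ?thesis unfolding Q_def by (rule someI_ex)
  qed
  have mQ: "subdivision_model G H Q"
    unfolding subdivision_model_def
  proof (intro conjI ballI impI)
    show "graph H" "verts H \<subseteq> verts G" using mP unfolding subdivision_model_def by auto
  next
    fix e assume e: "e \<in> edges H"
    have pe: "e = {hd (P e), last (P e)}" "(set (P e) - e) \<inter> verts H = {}"
      using mP e unfolding subdivision_model_def by auto
    show "is_path G (Q e)" using Q[OF e] unfolding induced_path_def by blast
    show "e = {hd (Q e), last (Q e)}" using Q[OF e] pe by simp
    show "(set (Q e) - e) \<inter> verts H = {}" using Q[OF e] pe by blast
  next
    fix e e' assume ee: "e \<in> edges H" "e' \<in> edges H" "e \<noteq> e'"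
    have "set (P e) \<inter> set (P e') \<subseteq> e \<inter> e'"
      using mP ee unfolding subdivision_model_def by (elim conjE) (erule ballE, erule ballE, auto)
    moreover have "set (Q e) \<subseteq> set (P e)" "set (Q e') \<subseteq> set (P e')"
      using Q[OF ee(1)] Q[OF ee(2)] by auto
    ultimately show "set (Q e) \<inter> set (Q e') \<subseteq> e \<inter> e'" by blast
  qed
  have lenQ: "1 \<le> path_len (Q e) \<and> path_len (Q e) \<le> r + 1" if e: "e \<in> edges H" for e
  proof -
    have pe: "e = {hd (P e), last (P e)}" using mP e unfolding subdivision_model_def by auto
    obtain u v where "u \<noteq> v" "e = {u,v}" using graph_edge_two[OF gH e] by blast
    hence "hd (P e) \<noteq> last (P e)" using pe by (metis doubleton_eq_iff)
    hence "hd (Q e) \<noteq> last (Q e)" using Q[OF e] by simp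
    hence n1: "length (Q e) \<noteq> 1"
      by (metis One_nat_def hd_conv_nth last_conv_nth length_0_conv diff_Suc_1 zero_neq_one)
    have n0: "Q e \<noteq> []" using Q[OF e] unfolding induced_path_def is_path_def by blast
    have l2: "2 \<le> length (Q e)" using n1 n0 by (cases "length (Q e)") auto
    have "real (path_len (P e)) \<le> real r + 1" using lenP e by simp
    hence "length (P e) - 1 \<le> r + 1" unfolding path_len_def by linarith
    note l2 this Q[OF e]
    then show ?thesis unfolding path_len_def by linarith
  qed
  define E where "E i = {e \<in> edges H. path_len (Q e) = Suc i}" for i
  have finE: "finite (edges H)"
  proof -
    have "edges H \<subseteq> Pow (verts H)" using graph_edge_two[OF gH] by blast
    moreover have "finite (verts H)" using gH unfolding graph_def by blast
    ultimately show ?thesis by (meson finite_Pow_iff finite_subset)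
  qed
  have union: "edges H = (\<Union>i\<in>{..r}. E i)"
  proof
    show "edges H \<subseteq> (\<Union>i\<in>{..r}. E i)"
    proof
      fix e assume e: "e \<in> edges H"
      have "path_len (Q e) - 1 \<in> {..r}" "path_len (Q e) = Suc (path_len (Q e) - 1)"
        using lenQ[OF e] by auto
      then show "e \<in> (\<Union>i\<in>{..r}. E i)" unfolding E_def using e by blast
    qed
  qed (auto simp: E_def)
  have finEi: "finite (E i)" for i using finE unfolding E_def by simp
  have cardsum: "card (edges H) = (\<Sum>i\<le>r. card (E i))"
    unfolding union
    by (rule card_UN_disjoint) (use finEi in \<open>auto simp: E_def\<close>)
  obtain i where i: "i \<le> r" "real (card (E i)) \<ge> real (card (edges H)) / real (r + 1)"
  proof (rule ccontr)
    assume "\<not> thesis"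
    with that have lt: "\<forall>i\<in>{..r}. real (card (E i)) < real (card (edges H)) / real (r + 1)"
      by force
    have "real (card (edges H)) = (\<Sum>i\<le>r. real (card (E i)))" using cardsum by simp
    also have "\<dots> < (\<Sum>i\<le>r. real (card (edges H)) / real (r + 1))"
      by (rule sum_strict_mono) (use lt in auto)
    also have "\<dots> = real (card (edges H))" by simp
    finally show False by simp
  qed
  define H' where "H' = (verts H, E i)"
  have vH': "verts H' = verts H" and eH': "edges H' = E i"
    unfolding H'_def verts_def edges_def by auto
  have EsubH: "E i \<subseteq> edges H" unfolding E_def by blast
  have gH': "graph H'" unfolding graph_def vH' eH'
  proof (intro conjI ballI)
    show "finite (verts H)" using gH unfolding graph_def by blast
    fix e assume "e \<in> E i"
    then show "\<exists>u v. u \<in> verts H \<and> v \<in> verts H \<and> u \<noteq> v \<and> e = {u, v}"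
      using graph_edge_two[OF gH] EsubH by blast
  qed
  have "subdivision_model G H' Q"
    unfolding subdivision_model_def vH' eH'
  proof (intro conjI ballI impI)
    show "graph H'" by (rule gH')
    show "verts H \<subseteq> verts G" using mQ unfolding subdivision_model_def by blast
  next
    fix e assume "e \<in> E i"
    hence e: "e \<in> edges H" using EsubH by blast
    show "is_path G (Q e)" "e = {hd (Q e), last (Q e)}" "(set (Q e) - e) \<inter> verts H = {}"
      using mQ e unfolding subdivision_model_def by auto
  next
    fix e e' assume "e \<in> E i" "e' \<in> E i" "e \<noteq> e'"
    hence ee: "e \<in> edges H" "e' \<in> edges H" "e \<noteq> e'" using EsubH by auto
    from mQ have "\<forall>e\<in>edges H. \<forall>e'\<in>edges H. e \<noteq> e' \<longrightarrow> set (Q e) \<inter> set (Q e') \<subseteq> e \<inter> e'"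
      unfolding subdivision_model_def by blast
    then show "set (Q e) \<inter> set (Q e') \<subseteq> e \<inter> e'" using ee by blast
  qed
  moreover have "\<forall>e\<in>edges H'. path_len (Q e) = i + 1 \<and> induced_path G (Q e)"
    using Q EsubH unfolding eH' E_def by auto
  ultimately have "stable_subdivision i H' G" unfolding stable_subdivision_def by blast
  moreover have "density H' \<ge> \<delta> / real (r + 1)"
  proof -
    have "\<delta> / real (r + 1) \<le> density H / real (r + 1)"
      using H(2) by (simp add: divide_right_mono)
    also have "\<dots> = (real (card (edges H)) / real (r + 1)) / real (card (verts H))"
      unfolding density_def by simp
    also have "\<dots> \<le> real (card (E i)) / real (card (verts H))"
      using i(2) by (rule divide_right_mono) simp
    also have "\<dots> = density H'" unfolding density_def vH' eH' by simp
    finally show ?thesis .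
  qed
  ultimately show ?thesis using i(1) by blast
qed

end
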